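(* Let $\tau_n$ be a uniformly random element of $\mathrm{Av}_n(321)$ and let $(a_n)$, $(b_n)$ be sequences of integers with $0<a_n\le b_n$. Then \[ \lim_{n\to\infty}\mathbb{P}\big(\tau_n(i)=i \text{ for some } i\in[a_n,b_n]\big)=0 \] if and only if $a_n\to\infty$ and $n-b_n\to\infty$.
   Context: $\mathrm{Av}_n(321)$ is the set of permutations $\tau\in S_n$ containing no indices $i<j<k$ with $\tau(i)>\tau(j)>\tau(k)$. *)

theory Defs
  imports Complex_Main "HOL-Combinatorics.Permutations"
begin

text \<open>Av_n(321): permutations of [n] = {1..n} with no decreasing subsequence of length 3.
  Permutations are functions nat => nat that permute {1..n} (identity outside).\<close>
definition av321 :: "nat \<Rightarrow> (nat \<Rightarrow> nat) set" where
  "av321 n = {\<tau>. \<tau> permutes {1..n} \<and>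
     \<not> (\<exists>i j k. 1 \<le> i \<and> i < j \<and> j < k \<and> k \<le> n \<and> \<tau> i > \<tau> j \<and> \<tau> j > \<tau> k)}"

definition prob_fixed_in :: "nat \<Rightarrow> int \<Rightarrow> int \<Rightarrow> real" where
  "prob_fixed_in n a b =
     real (card {\<tau> \<in> av321 n. \<exists>i::nat. a \<le> int i \<and> int i \<le> b \<and> \<tau> i = i}) / real (card (av321 n))"

end

theory Submission
  imports Defs "HOL-Analysis.Analysis"
begin


fun free321 :: "nat list \<Rightarrow> bool" where
  "free321 [] = True"
| "free321 (x # xs) = (sorted (filter (\<lambda>y. y < x) xs) \<and> free321 xs)"

lemma free321_insmax:
  assumes "\<forall>y\<in>set us \<union> set vs. y < x"
  shows "free321 (us @ x # vs) \<longleftrightarrow> free321 (us @ vs) \<and> sorted vs"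
  using assms
proof (induction us)
  case Nil
  have "filter (\<lambda>y. y < x) vs = vs" using Nil by (auto intro: filter_True)
  then show ?case by auto
next
  case (Cons u us)
  have "filter (\<lambda>y. y < u) (us @ x # vs) = filter (\<lambda>y. y < u) (us @ vs)"
    using Cons.prems by auto
  then show ?case using Cons by auto
qed

lemma free321_append_sep:
  assumes "\<forall>y\<in>set ys. \<forall>z\<in>set zs. y < z"
  shows "free321 (ys @ zs) \<longleftrightarrow> free321 ys \<and> free321 zs"
  using assms
proof (induction ys)
  case Nil then show ?case by simp
next
  case (Cons u ys)
  have "filter (\<lambda>y. y < u) (ys @ zs) = filter (\<lambda>y. y < u) ys"
    using Cons.prems by (auto intro!: filter_False)
  then show ?case using Cons by auto
qed

lemma free321_map_add: "free321 (map (\<lambda>z. z + c) zs) \<longleftrightarrow> free321 zs"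
proof (induction zs)
  case Nil then show ?case by simp
next
  case (Cons u zs)
  have "filter (\<lambda>y. y < u + c) (map (\<lambda>z. z + c) zs) = map (\<lambda>z. z + c) (filter (\<lambda>y. y < u) zs)"
    by (induction zs) auto
  moreover have "sorted (map (\<lambda>z. z + c) ws) \<longleftrightarrow> sorted ws" for ws :: "nat list"
    by (simp add: sorted_map)
  ultimately show ?case using Cons by simp
qed

lemma free321_no_pat:
  assumes "free321 (ys @ x # w)" "y \<in> set ys" "z \<in> set w" "y > x" "x > z"
  shows False
  using assms
proof (induction ys)
  case Nil then show ?case by simp
next
  case (Cons u ys)
  show ?case
  proof (cases "u = y")
    case True
    have "sorted (filter (\<lambda>v. v < y) (ys @ x # w))" using Cons.prems True by simp
    then have "sorted (filter (\<lambda>v. v < y) ys @ x # filter (\<lambda>v. v < y) w)" using Cons.prems by simp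
    then have "\<forall>v\<in>set (filter (\<lambda>v. v < y) w). x \<le> v" by (simp add: sorted_append)
    then show False using Cons.prems by auto
  next
    case False
    then show False using Cons by auto
  qed
qed

definition idx321 :: "nat list \<Rightarrow> bool" where
  "idx321 xs \<longleftrightarrow> (\<exists>i j k. i < j \<and> j < k \<and> k < length xs \<and> xs!i > xs!j \<and> xs!j > xs!k)"

lemma sorted_filter_nth:
  "sorted (filter P xs) \<longleftrightarrow> (\<forall>j k. j < k \<longrightarrow> k < length xs \<longrightarrow> P (xs!j) \<longrightarrow> P (xs!k) \<longrightarrow> xs!j \<le> xs!k)"
proof (induction xs)
  case Nil then show ?case by simp
next
  case (Cons y ys)
  have A: "(\<forall>j k. j < k \<longrightarrow> k < length (y#ys) \<longrightarrow> P ((y#ys)!j) \<longrightarrow> P ((y#ys)!k) \<longrightarrow> (y#ys)!j \<le> (y#ys)!k)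
     \<longleftrightarrow> (\<forall>k < length ys. P y \<longrightarrow> P (ys!k) \<longrightarrow> y \<le> ys!k) \<and>
         (\<forall>j k. j < k \<longrightarrow> k < length ys \<longrightarrow> P (ys!j) \<longrightarrow> P (ys!k) \<longrightarrow> ys!j \<le> ys!k)"
    (is "?L \<longleftrightarrow> ?R1 \<and> ?R2")
  proof
    assume L: ?L
    have "?R1"
    proof (intro allI impI)
      fix k assume "k < length ys" "P y" "P (ys!k)"
      then show "y \<le> ys!k" using L[rule_format, of 0 "Suc k"] by simp
    qed
    moreover have ?R2
    proof (intro allI impI)
      fix j k assume "j < k" "k < length ys" "P (ys!j)" "P (ys!k)"
      then show "ys!j \<le> ys!k" using L[rule_format, of "Suc j" "Suc k"] by simp
    qed
    ultimately show "?R1 \<and> ?R2" ..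
  next
    assume R: "?R1 \<and> ?R2"
    show ?L
    proof (intro allI impI)
      fix j k assume jk: "j < k" "k < length (y#ys)" "P ((y#ys)!j)" "P ((y#ys)!k)"
      then obtain k' where k': "k = Suc k'" by (cases k) auto
      show "(y#ys)!j \<le> (y#ys)!k"
      proof (cases j)
        case 0 then show ?thesis using R jk k' by auto
      next
        case (Suc j') then show ?thesis using R jk k' by auto
      qed
    qed
  qed
  have B: "(\<forall>k < length ys. P y \<longrightarrow> P (ys!k) \<longrightarrow> y \<le> ys!k) \<longleftrightarrow> (P y \<longrightarrow> (\<forall>v\<in>set (filter P ys). y \<le> v))"
    by (auto simp: in_set_conv_nth)
  show ?case using A B Cons.IH by auto
qed

lemma idx321_Cons:
  "idx321 (x # xs) \<longleftrightarrow> (\<exists>j k. j < k \<and> k < length xs \<and> x > xs!j \<and> xs!j > xs!k) \<or> idx321 xs"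
proof
  assume "idx321 (x # xs)"
  then obtain i j k where ijk: "i < j" "j < k" "k < Suc (length xs)" "(x#xs)!i > (x#xs)!j" "(x#xs)!j > (x#xs)!k"
    unfolding idx321_def by auto
  obtain j' k' where jk: "j = Suc j'" "k = Suc k'" using ijk by (cases j; cases k) auto
  show "(\<exists>j k. j < k \<and> k < length xs \<and> x > xs!j \<and> xs!j > xs!k) \<or> idx321 xs"
  proof (cases i)
    case 0 then show ?thesis using ijk jk by auto
  next
    case (Suc i') then show ?thesis using ijk jk unfolding idx321_def
      by (intro disjI2 exI[of _ i'] exI[of _ j'] exI[of _ k']) auto
  qed
next
  assume "(\<exists>j k. j < k \<and> k < length xs \<and> x > xs!j \<and> xs!j > xs!k) \<or> idx321 xs"
  then show "idx321 (x # xs)"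
  proof
    assume "\<exists>j k. j < k \<and> k < length xs \<and> x > xs!j \<and> xs!j > xs!k"
    then obtain j k where "j < k \<and> k < length xs \<and> x > xs!j \<and> xs!j > xs!k" by blast
    then show ?thesis unfolding idx321_def by (intro exI[of _ 0] exI[of _ "Suc j"] exI[of _ "Suc k"]) auto
  next
    assume "idx321 xs"
    then obtain i j k where "i < j \<and> j < k \<and> k < length xs \<and> xs!i > xs!j \<and> xs!j > xs!k"
      unfolding idx321_def by blast
    then show ?thesis unfolding idx321_def by (intro exI[of _ "Suc i"] exI[of _ "Suc j"] exI[of _ "Suc k"]) auto
  qed
qed

lemma free321_iff: "free321 xs \<longleftrightarrow> \<not> idx321 xs"
proof (induction xs)
  case Nil then show ?case by (simp add: idx321_def)
next
  case (Cons x xs)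
  show ?case using Cons.IH
    apply (simp add: idx321_Cons sorted_filter_nth)
    by (meson not_le order.strict_trans)
qed


definition LL :: "nat \<Rightarrow> nat list set" where
  "LL n = {xs. distinct xs \<and> set xs = {1..n} \<and> free321 xs}"

lemma LL_length: "xs \<in> LL n \<Longrightarrow> length xs = n"
  unfolding LL_def using distinct_card by fastforce

lemma finite_LL: "finite (LL n)"
proof -
  have "LL n \<subseteq> {xs. set xs \<subseteq> {1..n} \<and> length xs = n}"
    using LL_length unfolding LL_def by auto
  moreover have "finite {xs. set xs \<subseteq> {1..n} \<and> length xs = n}"
    by (rule finite_lists_length_eq) simp
  ultimately show ?thesis by (rule finite_subset)
qed

definition VV :: "nat list \<Rightarrow> nat set" where
  "VV xs = {p. p \<le> length xs \<and> sorted (drop p xs)}"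

definition sites :: "nat list \<Rightarrow> nat" where
  "sites xs = card (VV xs)"

definition ins :: "nat \<Rightarrow> nat \<Rightarrow> nat list \<Rightarrow> nat list" where
  "ins p x xs = take p xs @ x # drop p xs"

lemma VV_up: "p \<in> VV xs \<Longrightarrow> p \<le> r \<Longrightarrow> r \<le> length xs \<Longrightarrow> r \<in> VV xs"
proof -
  assume a: "p \<in> VV xs" "p \<le> r" "r \<le> length xs"
  have "drop r xs = drop (r - p) (drop p xs)" using a by simp
  moreover have "sorted (drop p xs)" using a(1) unfolding VV_def by simp
  ultimately have "sorted (drop r xs)" by (metis sorted_wrt_drop)
  then show ?thesis using a unfolding VV_def by simp
qed

lemma VV_len: "length xs \<in> VV xs" unfolding VV_def by simp

lemma VV_eq: "VV xs = {Min (VV xs)..length xs}"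
proof -
  have fin: "finite (VV xs)" unfolding VV_def by auto
  have ne: "VV xs \<noteq> {}" using VV_len by auto
  have m: "Min (VV xs) \<in> VV xs" using fin ne by simp
  show ?thesis
  proof
    show "VV xs \<subseteq> {Min (VV xs)..length xs}" using fin unfolding VV_def by auto
    show "{Min (VV xs)..length xs} \<subseteq> VV xs" using VV_up[OF m] by auto
  qed
qed

lemma sites_eq: "sites xs = length xs + 1 - Min (VV xs)"
  unfolding sites_def by (subst VV_eq) simp

lemma sites_bounds: "1 \<le> sites xs" "sites xs \<le> length xs + 1"
proof -
  have "Min (VV xs) \<le> length xs" using VV_len[of xs] unfolding VV_def by (intro Min_le) auto
  then show "1 \<le> sites xs" "sites xs \<le> length xs + 1" using sites_eq[of xs] by auto
qed

lemma set_ins: "set (ins p x ys) = insert x (set ys)"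
proof -
  have "set (take p ys) \<union> set (drop p ys) = set ys" by (metis append_take_drop_id set_append)
  then show ?thesis by (auto simp: ins_def)
qed

lemma distinct_ins: "distinct ys \<Longrightarrow> x \<notin> set ys \<Longrightarrow> distinct (ins p x ys)"
proof -
  assume "distinct ys" "x \<notin> set ys"
  moreover have "distinct (take p ys @ drop p ys)" using \<open>distinct ys\<close> by simp
  moreover have "set (take p ys) \<union> set (drop p ys) = set ys" by (metis append_take_drop_id set_append)
  ultimately show ?thesis unfolding ins_def by (auto simp del: append_take_drop_id)
qed

lemma ins_LL:
  assumes "ys \<in> LL n" "p \<le> n" "sorted (drop p ys)"
  shows "ins p (Suc n) ys \<in> LL (Suc n)"
proof -
  have d: "distinct ys" and s: "set ys = {1..n}" and f: "free321 ys" using assms(1) unfolding LL_def by auto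
  have lt: "\<forall>y\<in>set (take p ys) \<union> set (drop p ys). y < Suc n"
    using s by (auto dest: in_set_takeD in_set_dropD)
  have "free321 (ins p (Suc n) ys)"
    unfolding ins_def using free321_insmax[OF lt] f assms(3) by simp
  moreover have "distinct (ins p (Suc n) ys)" using distinct_ins[OF d] s by auto
  moreover have "set (ins p (Suc n) ys) = {1..Suc n}" using set_ins s by auto
  ultimately show ?thesis unfolding LL_def by auto
qed

lemma LL_decomp:
  assumes "xs \<in> LL (Suc n)"
  shows "\<exists>ys p. ys \<in> LL n \<and> p \<le> n \<and> sorted (drop p ys) \<and> xs = ins p (Suc n) ys"
proof -
  have d: "distinct xs" and s: "set xs = {1..Suc n}" and f: "free321 xs" using assms unfolding LL_def by auto
  then have "Suc n \<in> set xs" by auto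
  then obtain us vs where xs: "xs = us @ Suc n # vs" by (meson split_list)
  have sub: "set us \<union> set vs \<subseteq> {1..Suc n}" using s xs by auto
  have nin: "Suc n \<notin> set us \<union> set vs" using d xs by auto
  have lt: "\<forall>y\<in>set us \<union> set vs. y < Suc n"
  proof
    fix y assume "y \<in> set us \<union> set vs"
    then have "y \<in> {1..Suc n}" "y \<noteq> Suc n" using sub nin by auto
    then show "y < Suc n" by simp
  qed
  have "free321 (us @ Suc n # vs)" using f xs by simp
  then have f2: "free321 (us @ vs)" "sorted vs" using free321_insmax[OF lt] by simp_all
  have "set (us @ vs) = {1..n}"
  proof -
    have "set xs = insert (Suc n) (set (us @ vs))" using xs by simp
    then have "set (us @ vs) = set xs - {Suc n}" using nin by auto
    then show ?thesis using s by auto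
  qed
  moreover have "distinct (us @ vs)" using d xs by auto
  ultimately have L: "us @ vs \<in> LL n" using f2 unfolding LL_def by auto
  have len: "length us \<le> n" using LL_length[OF L] by simp
  have "xs = ins (length us) (Suc n) (us @ vs)" using xs by (simp add: ins_def)
  moreover have "drop (length us) (us @ vs) = vs" by simp
  ultimately show ?thesis using L len f2 by metis
qed

lemma ins_inj:
  assumes "x \<notin> set ys" "x \<notin> set ys'" "p \<le> length ys" "p' \<le> length ys'" "ins p x ys = ins p' x ys'"
  shows "p = p' \<and> ys = ys'"
proof -
  have "x \<notin> set (take p ys)" "x \<notin> set (drop p ys)" using assms(1,2) by (auto dest: in_set_takeD in_set_dropD)
  then have "take p ys = take p' ys' \<and> drop p ys = drop p' ys'"
    using assms(5) unfolding ins_def by (simp add: append_Cons_eq_iff)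
  then show ?thesis using assms(3,4)
    by (metis append_take_drop_id length_take min.absorb2)
qed

lemma VV_ins:
  assumes "length ys = n" "\<forall>y\<in>set ys. y < Suc n" "p \<in> VV ys"
  shows "VV (ins p (Suc n) ys) = (if p = n then insert (Suc n) (VV ys) else {Suc p..Suc n})"
proof -
  have pn: "p \<le> n" and sp: "sorted (drop p ys)" using assms unfolding VV_def by auto
  let ?z = "ins p (Suc n) ys"
  have lz: "length ?z = Suc n" using assms pn unfolding ins_def by simp
  show ?thesis
  proof (cases "p = n")
    case True
    then have z: "?z = ys @ [Suc n]" using assms unfolding ins_def by simp
    have "r \<in> VV ?z \<longleftrightarrow> r \<in> insert (Suc n) (VV ys)" for r
    proof (cases "r \<le> n")
      case True
      have "drop r ?z = drop r ys @ [Suc n]" using z True assms by simp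
      moreover have "\<forall>y\<in>set (drop r ys). y \<le> Suc n" using assms(2) by (meson in_set_dropD less_imp_le)
      ultimately have "sorted (drop r ?z) \<longleftrightarrow> sorted (drop r ys)" by (auto simp: sorted_append)
      then show ?thesis using True lz assms(1) by (simp add: VV_def)
    next
      case False
      then have "r \<le> Suc n \<longleftrightarrow> r = Suc n" by auto
      then show ?thesis using lz assms(1) False by (simp add: VV_def)
    qed
    then show ?thesis using True by (simp add: set_eq_iff)
  next
    case False
    then have pl: "p < n" using pn by simp
    have "r \<in> VV ?z \<longleftrightarrow> r \<in> {Suc p..Suc n}" for r
    proof (cases "r \<le> p")
      case True
      have "drop r ?z = drop r (take p ys) @ Suc n # drop p ys"
        using True pn assms(1) unfolding ins_def by (simp add: min_def)
      moreover obtain w ws where wws: "drop p ys = w # ws" using pl assms(1)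
        by (cases "drop p ys") auto
      moreover have "w < Suc n"
      proof -
        have "w \<in> set (drop p ys)" using wws by simp
        then show ?thesis using assms(2) by (blast dest: in_set_dropD)
      qed
      ultimately have "\<not> sorted (drop r ?z)" by (auto simp: sorted_append)
      then show ?thesis using True by (simp add: VV_def)
    next
      case False
      then have "drop r ?z = drop (r - Suc p) (drop p ys)"
        unfolding ins_def using pn assms(1)
        by (simp add: drop_Cons' min_def)
      then have "r \<le> Suc n \<Longrightarrow> sorted (drop r ?z)" using sp sorted_wrt_drop by metis
      then show ?thesis using False lz by (auto simp add: VV_def)
    qed
    then show ?thesis using False by (simp add: set_eq_iff)
  qed
qed

lemma sites_ins:
  assumes "length ys = n" "\<forall>y\<in>set ys. y < Suc n" "p \<in> VV ys"
  shows "sites (ins p (Suc n) ys) = (if p = n then sites ys + 1 else n - p + 1)"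
proof -
  have "Suc n \<notin> VV ys" using assms(1) unfolding VV_def by auto
  moreover have "finite (VV ys)" unfolding VV_def by auto
  moreover have "p \<le> n" using assms unfolding VV_def by auto
  ultimately show ?thesis unfolding sites_def using VV_ins[OF assms] by auto
qed


definition lab :: "nat list \<Rightarrow> nat \<Rightarrow> nat" where
  "lab ys p = (if p = length ys then sites ys + 1 else length ys - p + 1)"

lemma lab_count:
  "card {p \<in> VV ys. lab ys p = k} = (if 2 \<le> k \<and> k \<le> sites ys + 1 then 1 else 0)"
proof -
  define n where "n = length ys"
  define q where "q = Min (VV ys)"
  have V: "VV ys = {q..n}" unfolding q_def n_def by (rule VV_eq)
  have qn: "q \<le> n" using VV_len[of ys] V n_def by auto
  have s: "sites ys = n + 1 - q" unfolding q_def n_def by (rule sites_eq)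
  show ?thesis
  proof (cases "2 \<le> k \<and> k \<le> sites ys + 1")
    case True
    have "{p \<in> VV ys. lab ys p = k} = {if k = n + 2 - q then n else n + 1 - k}"
    proof (cases "k = n + 2 - q")
      case True
      then show ?thesis using qn unfolding V lab_def s n_def[symmetric] by auto
    next
      case False
      then show ?thesis using qn \<open>2 \<le> k \<and> k \<le> sites ys + 1\<close> unfolding V lab_def s n_def[symmetric]
        by auto
    qed
    then have "card {p \<in> VV ys. lab ys p = k} = 1" by (simp only: card.empty card_insert_if finite.emptyI) simp
    then show ?thesis using True by simp
  next
    case False
    have "{p \<in> VV ys. lab ys p = k} = {}"
      using False qn unfolding V lab_def s n_def[symmetric] by auto
    then show ?thesis using False by (simp only: card.empty if_False)
  qed
qed

definition FF :: "nat \<Rightarrow> nat \<Rightarrow> nat" where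
  "FF n k = card {xs \<in> LL n. sites xs = k}"

lemma card_filter_sum: "finite A \<Longrightarrow> card {x \<in> A. P x} = (\<Sum>x\<in>A. if P x then 1 else 0)"
  by (simp add: sum.If_cases Int_def)

lemma FF_Suc: "FF (Suc n) k = card {ys \<in> LL n. 2 \<le> k \<and> k \<le> sites ys + 1}"
proof -
  define S where "S = (SIGMA ys:LL n. {p \<in> VV ys. lab ys p = k})"
  define h where "h = (\<lambda>(ys, p). ins p (Suc n) ys)"
  have lt: "\<forall>y\<in>set ys. y < Suc n" if "ys \<in> LL n" for ys
    using that unfolding LL_def by auto
  have img: "{xs \<in> LL (Suc n). sites xs = k} = h ` S"
  proof
    show "{xs \<in> LL (Suc n). sites xs = k} \<subseteq> h ` S"
    proof
      fix xs assume xs: "xs \<in> {xs \<in> LL (Suc n). sites xs = k}"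
      then obtain ys p where yp: "ys \<in> LL n" "p \<le> n" "sorted (drop p ys)" "xs = ins p (Suc n) ys"
        using LL_decomp by blast
      have pV: "p \<in> VV ys" using yp LL_length unfolding VV_def by auto
      have len: "length ys = n" using LL_length[OF yp(1)] .
      have "sites xs = lab ys p"
        using sites_ins[OF LL_length[OF yp(1)] lt[OF yp(1)] pV] yp(4)
        unfolding lab_def len by simp
      then have "(ys, p) \<in> S" using xs yp pV unfolding S_def by auto
      then show "xs \<in> h ` S" using yp(4) unfolding h_def by force
    qed
  next
    show "h ` S \<subseteq> {xs \<in> LL (Suc n). sites xs = k}"
    proof
      fix xs assume "xs \<in> h ` S"
      then obtain ys p where yp: "ys \<in> LL n" "p \<in> VV ys" "lab ys p = k" "xs = ins p (Suc n) ys"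
        unfolding S_def h_def by auto
      have "p \<le> n" "sorted (drop p ys)" using yp(2) LL_length[OF yp(1)] unfolding VV_def by auto
      then have "xs \<in> LL (Suc n)" using ins_LL yp by simp
      moreover have len: "length ys = n" using LL_length[OF yp(1)] .
      moreover have "sites xs = k"
        using sites_ins[OF LL_length[OF yp(1)] lt[OF yp(1)] yp(2)] yp(3,4)
        unfolding lab_def len by simp
      ultimately show "xs \<in> {xs \<in> LL (Suc n). sites xs = k}" by simp
    qed
  qed
  have inj: "inj_on h S"
  proof (rule inj_onI)
    fix a b assume "a \<in> S" "b \<in> S" "h a = h b"
    then obtain ys p ys' p' where ab: "a = (ys, p)" "b = (ys', p')" "ys \<in> LL n" "ys' \<in> LL n"
      "p \<in> VV ys" "p' \<in> VV ys'" "ins p (Suc n) ys = ins p' (Suc n) ys'"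
      unfolding S_def h_def by auto
    have "Suc n \<notin> set ys" "Suc n \<notin> set ys'" using lt[OF ab(3)] lt[OF ab(4)] by auto
    moreover have "p \<le> length ys" "p' \<le> length ys'" using ab(5,6) unfolding VV_def by auto
    ultimately show "a = b" using ins_inj ab(7) ab(1,2) by blast
  qed
  have finV: "finite (VV ys)" for ys unfolding VV_def by auto
  have "FF (Suc n) k = card S" unfolding FF_def img using card_image[OF inj] by simp
  also have "\<dots> = (\<Sum>ys\<in>LL n. card {p \<in> VV ys. lab ys p = k})"
    unfolding S_def using finite_LL finV by (subst card_SigmaI) auto
  also have "\<dots> = (\<Sum>ys\<in>LL n. if 2 \<le> k \<and> k \<le> sites ys + 1 then 1 else 0)"
    by (simp add: lab_count)
  also have "\<dots> = card {ys \<in> LL n. 2 \<le> k \<and> k \<le> sites ys + 1}"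
    using card_filter_sum[OF finite_LL] by simp
  finally show ?thesis .
qed

lemma LL_0: "LL 0 = {[]}"
  unfolding LL_def by auto

lemma sites_Nil: "sites [] = 1"
  unfolding sites_def VV_def by simp

lemma sites_le: "xs \<in> LL n \<Longrightarrow> sites xs \<le> n + 1"
  using sites_bounds(2) LL_length by fastforce

lemma card_LL_FF: "card (LL n) = FF (Suc n) 2"
proof -
  have "{ys \<in> LL n. 2 \<le> (2::nat) \<and> 2 \<le> sites ys + 1} = LL n"
    using sites_bounds(1) by auto
  then show ?thesis using FF_Suc by simp
qed

lemma card_fibers:
  fixes f :: "'a \<Rightarrow> nat"
  assumes "finite A" "\<forall>x\<in>A. f x \<le> N"
  shows "card {x \<in> A. m \<le> f x} = (\<Sum>j\<in>{m..N}. card {x \<in> A. f x = j})"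
proof -
  have "{x \<in> A. m \<le> f x} = (\<Union>j\<in>{m..N}. {x \<in> A. f x = j})" using assms(2) by auto
  moreover have "card (\<Union>j\<in>{m..N}. {x \<in> A. f x = j}) = (\<Sum>j\<in>{m..N}. card {x \<in> A. f x = j})"
    using assms(1) by (intro card_UN_disjoint) auto
  ultimately show ?thesis by simp
qed


definition gg :: "nat \<Rightarrow> nat \<Rightarrow> int" where
  "gg n k = int ((2*n - k) choose (n - 1)) - int ((2*n - k) choose n)"

lemma gg_1: "n \<ge> 1 \<Longrightarrow> gg n 1 = 0"
proof -
  assume "n \<ge> 1"
  then have "(2*n - 1) choose (n - 1) = (2*n - 1) choose ((2*n - 1) - (n - 1))"
    by (intro binomial_symmetric) simp
  moreover have "(2*n - 1) - (n - 1) = n" using \<open>n \<ge> 1\<close> by simp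
  ultimately show ?thesis unfolding gg_def by simp
qed

lemma gg_last: "n \<ge> 1 \<Longrightarrow> gg n (n + 1) = 1"
proof -
  assume "n \<ge> 1"
  then have "2*n - (n+1) = n - 1" by simp
  moreover have "(n - 1) choose n = 0" using \<open>n \<ge> 1\<close> by simp
  ultimately show ?thesis unfolding gg_def by simp
qed

lemma gg_pascal:
  assumes "1 \<le> m" "m \<le> n"
  shows "gg n m + gg (Suc n) (m + 2) = gg (Suc n) (m + 1)"
proof -
  define a where "a = 2*n - m"
  have e1: "2 * Suc n - (m + 1) = Suc a" using assms unfolding a_def by simp
  have e2: "2 * Suc n - (m + 2) = a" using assms unfolding a_def by simp
  have e3: "2 * n - m = a" unfolding a_def by simp
  obtain n' where n': "n = Suc n'" using assms by (cases n) auto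
  have p1: "Suc a choose n = (a choose n') + (a choose n)" using n' by simp
  have p2: "Suc a choose Suc n = (a choose n) + (a choose Suc n)" by simp
  show ?thesis unfolding gg_def e1 e2 e3 using p1 p2 n' by simp
qed

lemma gg_sum:
  assumes "n \<ge> 1" "1 \<le> m" "m \<le> n + 1"
  shows "(\<Sum>j\<in>{m..n+1}. gg n j) = gg (Suc n) (m + 1)"
proof -
  have "\<forall>m. n + 1 - m = d \<longrightarrow> 1 \<le> m \<longrightarrow> m \<le> n + 1 \<longrightarrow> (\<Sum>j\<in>{m..n+1}. gg n j) = gg (Suc n) (m + 1)" for d
  proof (induction d)
    case 0
    show ?case
    proof (intro allI impI)
      fix m assume "n + 1 - m = 0" "1 \<le> m" "m \<le> n + 1"
      then have m: "m = n + 1" by simp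
      have "gg (Suc n) (Suc n + 1) = 1" by (rule gg_last) simp
      then show "(\<Sum>j\<in>{m..n+1}. gg n j) = gg (Suc n) (m + 1)"
        using m gg_last[OF assms(1)] by simp
    qed
  next
    case (Suc d)
    show ?case
    proof (intro allI impI)
      fix m assume md: "n + 1 - m = Suc d" "1 \<le> m" "m \<le> n + 1"
      then have mn: "m \<le> n" by simp
      have "{m..n+1} = insert m {Suc m..n+1}" using md by auto
      then have "(\<Sum>j\<in>{m..n+1}. gg n j) = gg n m + (\<Sum>j\<in>{Suc m..n+1}. gg n j)" by simp
      also have "(\<Sum>j\<in>{Suc m..n+1}. gg n j) = gg (Suc n) (Suc m + 1)"
        using Suc.IH[rule_format, of "Suc m"] md by simp
      also have "gg n m + gg (Suc n) (Suc m + 1) = gg (Suc n) (m + 1)"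
        using gg_pascal[OF md(2) mn] by simp
      finally show "(\<Sum>j\<in>{m..n+1}. gg n j) = gg (Suc n) (m + 1)" .
    qed
  qed
  then show ?thesis using assms by blast
qed

lemma FF_closed: "n \<ge> 1 \<Longrightarrow> 1 \<le> j \<Longrightarrow> j \<le> n + 1 \<Longrightarrow> int (FF n j) = gg n j"
proof (induction n arbitrary: j)
  case 0 then show ?case by simp
next
  case (Suc n)
  show ?case
  proof (cases "n = 0")
    case True
    have F: "FF 1 j = card {ys \<in> {[]}. 2 \<le> j \<and> j \<le> sites ys + 1}"
      using FF_Suc[of 0 j] by (simp add: LL_0)
    show ?thesis
    proof (cases "j = 1")
      case True then show ?thesis using F \<open>n = 0\<close> gg_1[of 1] by simp
    next
      case False
      then have "j = 2" using Suc.prems True by simp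
      moreover have "{ys \<in> {[]}. 2 \<le> j \<and> j \<le> sites ys + 1} = {[]}"
        using \<open>j = 2\<close> sites_Nil by auto
      ultimately show ?thesis using F \<open>n = 0\<close> by (simp add: gg_def)
    qed
  next
    case False
    then have n1: "n \<ge> 1" by simp
    show ?thesis
    proof (cases "j = 1")
      case True
      then show ?thesis using FF_Suc[of n j] gg_1[of "Suc n"] by simp
    next
      case False
      then have j2: "2 \<le> j" using Suc.prems by simp
      have "{ys \<in> LL n. 2 \<le> j \<and> j \<le> sites ys + 1} = {ys \<in> LL n. j - 1 \<le> sites ys}"
        using j2 by auto
      then have "FF (Suc n) j = card {ys \<in> LL n. j - 1 \<le> sites ys}" using FF_Suc by simp
      also have "\<dots> = (\<Sum>i\<in>{j-1..n+1}. FF n i)"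
        unfolding FF_def using sites_le by (intro card_fibers finite_LL) auto
      finally have "int (FF (Suc n) j) = (\<Sum>i\<in>{j-1..n+1}. int (FF n i))" by simp
      also have "\<dots> = (\<Sum>i\<in>{j-1..n+1}. gg n i)"
        using Suc.IH n1 j2 by (intro sum.cong) auto
      also have "\<dots> = gg (Suc n) (j - 1 + 1)"
        using gg_sum[OF n1, of "j - 1"] j2 Suc.prems by simp
      finally show ?thesis using j2 by simp
    qed
  qed
qed

lemma card_LL_int: "int (card (LL n)) = int ((2*n) choose n) - int ((2*n) choose Suc n)"
proof -
  have "int (card (LL n)) = gg (Suc n) 2" using card_LL_FF FF_closed[of "Suc n" 2] by simp
  then show ?thesis unfolding gg_def by simp
qed

lemma cat_alg:
  fixes F N b :: real
  assumes "N > 0" "b > 0"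
  shows "F / (N * (b * (N * b))) - F / ((1 + N) * (N * (b * b))) = F / (N * (b * ((1 + N) * (N * b))))"
proof -
  have nz: "N \<noteq> 0" "b \<noteq> 0" "1 + N \<noteq> 0" using assms by auto
  show ?thesis using nz by (simp add: divide_simps) (simp add: algebra_simps)
qed

lemma card_LL_real: "real (card (LL n)) = fact (2*n) / (fact n * fact (Suc n))"
proof (cases "n = 0")
  case True
  then show ?thesis using card_LL_int[of 0] by simp
next
  case False
  have r: "real (card (LL n)) = real ((2*n) choose n) - real ((2*n) choose Suc n)"
    using card_LL_int[of n] by (metis of_int_diff of_int_of_nat_eq)
  have b1: "real ((2*n) choose n) = fact (2*n) / (fact n * fact n)"
    by (subst binomial_fact) (auto simp: mult_2)
  have b2: "real ((2*n) choose Suc n) = fact (2*n) / (fact (Suc n) * fact (n - 1))"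
    using False by (subst binomial_fact) (auto simp: mult_2 numeral_2_eq_2)
  have f1: "(fact n :: real) = real n * fact (n - 1)" using False by (simp add: fact_reduce)
  have f2: "(fact (Suc n) :: real) = real (Suc n) * fact n" by simp
  have pos: "(fact (n - 1) :: real) > 0" "real n > 0" using False by auto
  show ?thesis unfolding r b1 b2 f2 unfolding f1
    using cat_alg[OF pos(2) pos(1), of "fact (2*n)"] by (simp add: mult.assoc)
qed


definition Phi :: "nat \<Rightarrow> (nat \<Rightarrow> nat) \<Rightarrow> nat list" where
  "Phi n \<tau> = map \<tau> [1..<Suc n]"

lemma Phi_nth: "t < n \<Longrightarrow> Phi n \<tau> ! t = \<tau> (Suc t)"
  unfolding Phi_def by (simp add: nth_map_upt del: upt_Suc)

lemma set_upt1: "set [1..<Suc n] = {1..n}" by auto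

lemma Phi_length: "length (Phi n \<tau>) = n" unfolding Phi_def by simp

lemma idx321_Phi:
  "idx321 (Phi n \<tau>) \<longleftrightarrow> (\<exists>i j k. 1 \<le> i \<and> i < j \<and> j < k \<and> k \<le> n \<and> \<tau> i > \<tau> j \<and> \<tau> j > \<tau> k)"
proof
  assume "idx321 (Phi n \<tau>)"
  then obtain i j k where ijk: "i < j" "j < k" "k < n" "Phi n \<tau> ! i > Phi n \<tau> ! j" "Phi n \<tau> ! j > Phi n \<tau> ! k"
    unfolding idx321_def Phi_length by blast
  then have "\<tau> (Suc i) > \<tau> (Suc j)" "\<tau> (Suc j) > \<tau> (Suc k)" by (simp_all add: Phi_nth)
  then show "\<exists>i j k. 1 \<le> i \<and> i < j \<and> j < k \<and> k \<le> n \<and> \<tau> i > \<tau> j \<and> \<tau> j > \<tau> k"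
    using ijk by (intro exI[of _ "Suc i"] exI[of _ "Suc j"] exI[of _ "Suc k"]) auto
next
  assume "\<exists>i j k. 1 \<le> i \<and> i < j \<and> j < k \<and> k \<le> n \<and> \<tau> i > \<tau> j \<and> \<tau> j > \<tau> k"
  then obtain i j k where ijk: "1 \<le> i" "i < j" "j < k" "k \<le> n" "\<tau> i > \<tau> j" "\<tau> j > \<tau> k" by blast
  have "Phi n \<tau> ! (i - 1) = \<tau> i" "Phi n \<tau> ! (j - 1) = \<tau> j" "Phi n \<tau> ! (k - 1) = \<tau> k"
    using ijk by (simp_all add: Phi_nth)
  then show "idx321 (Phi n \<tau>)" unfolding idx321_def Phi_length
    using ijk by (intro exI[of _ "i - 1"] exI[of _ "j - 1"] exI[of _ "k - 1"]) auto
qed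

lemma av321_iff: "\<tau> \<in> av321 n \<longleftrightarrow> \<tau> permutes {1..n} \<and> free321 (Phi n \<tau>)"
  unfolding av321_def free321_iff idx321_Phi by auto

lemma Phi_LL: assumes "\<tau> \<in> av321 n" shows "Phi n \<tau> \<in> LL n"
proof -
  have p: "\<tau> permutes {1..n}" and f: "free321 (Phi n \<tau>)" using assms av321_iff by auto
  have "inj_on \<tau> {1..n}" using p by (meson permutes_inj_on)
  then have "distinct (Phi n \<tau>)" unfolding Phi_def
    by (simp only: distinct_map set_upt1 distinct_upt)
  moreover have "set (Phi n \<tau>) = {1..n}" unfolding Phi_def
    using permutes_image[OF p] by (simp only: set_map set_upt1)
  ultimately show ?thesis using f unfolding LL_def by auto
qed

lemma Phi_inj: "inj_on (Phi n) (av321 n)"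
proof (rule inj_onI)
  fix \<tau> \<sigma> assume a: "\<tau> \<in> av321 n" "\<sigma> \<in> av321 n" "Phi n \<tau> = Phi n \<sigma>"
  have p: "\<tau> permutes {1..n}" "\<sigma> permutes {1..n}" using a av321_iff by auto
  show "\<tau> = \<sigma>"
  proof
    fix x show "\<tau> x = \<sigma> x"
    proof (cases "x \<in> {1..n}")
      case True
      then have "x - 1 < n" "Suc (x - 1) = x" by auto
      then show ?thesis using a(3) Phi_nth[of "x - 1" n] by metis
    next
      case False
      then show ?thesis using p by (simp add: permutes_not_in)
    qed
  qed
qed

lemma Phi_surj: assumes "xs \<in> LL n" shows "\<exists>\<tau>\<in>av321 n. Phi n \<tau> = xs"
proof -
  have d: "distinct xs" and s: "set xs = {1..n}" and f: "free321 xs" and l: "length xs = n"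
    using assms LL_length unfolding LL_def by auto
  define \<tau> where "\<tau> = (\<lambda>x. if x \<in> {1..n} then xs ! (x - 1) else x)"
  have inj: "inj_on \<tau> {1..n}"
  proof (rule inj_onI)
    fix x y assume "x \<in> {1..n}" "y \<in> {1..n}" "\<tau> x = \<tau> y"
    then have "xs ! (x - 1) = xs ! (y - 1)" "x - 1 < length xs" "y - 1 < length xs"
      unfolding \<tau>_def using l by auto
    then have "x - 1 = y - 1" using d nth_eq_iff_index_eq by blast
    then show "x = y" using \<open>x \<in> {1..n}\<close> \<open>y \<in> {1..n}\<close> by auto
  qed
  have img: "\<tau> ` {1..n} = {1..n}"
  proof -
    have "\<tau> ` {1..n} = (\<lambda>t. xs ! t) ` {0..<n}"
    proof
      show "\<tau> ` {1..n} \<subseteq> (\<lambda>t. xs ! t) ` {0..<n}" unfolding \<tau>_def by force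
      show "(\<lambda>t. xs ! t) ` {0..<n} \<subseteq> \<tau> ` {1..n}"
      proof
        fix y assume "y \<in> (\<lambda>t. xs ! t) ` {0..<n}"
        then obtain t where "t < n" "y = xs ! t" by auto
        then have "y = \<tau> (Suc t)" "Suc t \<in> {1..n}" unfolding \<tau>_def by auto
        then show "y \<in> \<tau> ` {1..n}" by blast
      qed
    qed
    also have "\<dots> = set xs" using l by (auto simp: set_conv_nth)
    finally show ?thesis using s by simp
  qed
  have p: "\<tau> permutes {1..n}"
  proof (rule bij_imp_permutes)
    show "bij_betw \<tau> {1..n} {1..n}" using inj img by (simp add: bij_betw_def)
    show "\<tau> x = x" if "x \<notin> {1..n}" for x using that unfolding \<tau>_def by auto
  qed
  have e: "Phi n \<tau> = xs"
    by (rule nth_equalityI) (auto simp: Phi_length l Phi_nth \<tau>_def)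
  then have "\<tau> \<in> av321 n" using av321_iff p f by simp
  then show ?thesis using e by blast
qed

lemma Phi_bij: "bij_betw (Phi n) (av321 n) (LL n)"
  unfolding bij_betw_def using Phi_inj Phi_LL Phi_surj by blast

lemma card_av321: "card (av321 n) = card (LL n)"
  using Phi_bij bij_betw_same_card by blast

lemma card_av321_fix:
  assumes "1 \<le> i" "i \<le> n"
  shows "card {\<tau> \<in> av321 n. \<tau> i = i} = card {xs \<in> LL n. xs ! (i - 1) = i}"
proof -
  have "bij_betw (Phi n) {\<tau> \<in> av321 n. \<tau> i = i} {xs \<in> LL n. xs ! (i - 1) = i}"
  proof -
    have "Phi n ` {\<tau> \<in> av321 n. \<tau> i = i} = {xs \<in> LL n. xs ! (i - 1) = i}"
    proof -
      have nth: "Phi n \<tau> ! (i - 1) = \<tau> i" for \<tau> using assms Phi_nth[of "i - 1" n \<tau>] by simp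
      have "Phi n ` {\<tau> \<in> av321 n. \<tau> i = i} = {xs \<in> Phi n ` av321 n. xs ! (i - 1) = i}"
        using nth by auto
      then show ?thesis using Phi_bij unfolding bij_betw_def by simp
    qed
    moreover have "inj_on (Phi n) {\<tau> \<in> av321 n. \<tau> i = i}"
      using Phi_inj by (rule inj_on_subset) auto
    ultimately show ?thesis unfolding bij_betw_def by simp
  qed
  then show ?thesis by (rule bij_betw_same_card)
qed


lemma image_plus_interval: "(\<lambda>z::nat. z + i) ` {1..m} = {i+1..i+m}"
proof
  show "(\<lambda>z. z + i) ` {1..m} \<subseteq> {i + 1..i + m}" by auto
  show "{i + 1..i + m} \<subseteq> (\<lambda>z. z + i) ` {1..m}"
  proof
    fix x assume "x \<in> {i + 1..i + m}"
    then have "x = (x - i) + i" "x - i \<in> {1..m}" by auto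
    then show "x \<in> (\<lambda>z. z + i) ` {1..m}" by blast
  qed
qed

lemma image_minus_interval: "(\<lambda>z::nat. z - i) ` {i+1..n} = {1..n-i}"
proof
  show "(\<lambda>z. z - i) ` {i+1..n} \<subseteq> {1..n-i}" by auto
  show "{1..n-i} \<subseteq> (\<lambda>z. z - i) ` {i+1..n}"
  proof
    fix x assume "x \<in> {1..n-i}"
    then have "x = (x + i) - i" "x + i \<in> {i+1..n}" by auto
    then show "x \<in> (\<lambda>z. z - i) ` {i+1..n}" by blast
  qed
qed

lemma fix_forward:
  assumes "1 \<le> i" "i \<le> n" "ys \<in> LL (i - 1)" "zs \<in> LL (n - i)"
  shows "ys @ i # map (\<lambda>z. z + i) zs \<in> LL n \<and> (ys @ i # map (\<lambda>z. z + i) zs) ! (i - 1) = i"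
proof -
  have dy: "distinct ys" and sy: "set ys = {1..i-1}" and fy: "free321 ys" and ly: "length ys = i - 1"
    using assms(3) LL_length unfolding LL_def by auto
  have dz: "distinct zs" and sz: "set zs = {1..n-i}" and fz: "free321 zs"
    using assms(4) unfolding LL_def by auto
  let ?w = "map (\<lambda>z. z + i) zs"
  have sw: "set ?w = {i+1..n}" using sz image_plus_interval[of i "n - i"] assms by simp
  have dw: "distinct ?w" using dz by (simp add: distinct_map)
  have fw: "free321 ?w" using fz free321_map_add by simp
  have sep: "\<forall>y\<in>set ys. \<forall>z\<in>set (i # ?w). y < z" using sy sw by auto
  have fi: "free321 (i # ?w)"
  proof -
    have "filter (\<lambda>y. y < i) ?w = []" using sw by (auto simp: filter_empty_conv)
    then show ?thesis using fw by simp
  qed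
  have "free321 (ys @ i # ?w)" using free321_append_sep[OF sep] fy fi by simp
  moreover have "distinct (ys @ i # ?w)" using dy dw sy sw by auto
  moreover have "set (ys @ i # ?w) = {1..n}" using sy sw assms(1,2) by auto
  ultimately have "ys @ i # ?w \<in> LL n" unfolding LL_def by auto
  moreover have "(ys @ i # ?w) ! (i - 1) = i" using ly by (simp add: nth_append)
  ultimately show ?thesis by simp
qed

lemma fix_backward:
  assumes "1 \<le> i" "i \<le> n" "xs \<in> LL n" "xs ! (i - 1) = i"
  shows "\<exists>ys zs. ys \<in> LL (i - 1) \<and> zs \<in> LL (n - i) \<and> xs = ys @ i # map (\<lambda>z. z + i) zs"
proof -
  have d: "distinct xs" and s: "set xs = {1..n}" and f: "free321 xs" and l: "length xs = n"
    using assms(3) LL_length unfolding LL_def by auto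
  define ys where "ys = take (i - 1) xs"
  define w where "w = drop i xs"
  have xs: "xs = ys @ i # w"
    unfolding ys_def w_def using id_take_nth_drop[of "i - 1" xs] assms l by simp
  have ly: "length ys = i - 1" unfolding ys_def using assms l by simp
  have dys: "distinct ys" "i \<notin> set ys" "i \<notin> set w" "distinct w" "set ys \<inter> set w = {}"
    using d xs by auto
  have fys: "free321 (ys @ i # w)" using f xs by simp
  have small: "\<forall>y\<in>set ys. y < i"
  proof (rule ccontr)
    assume "\<not> (\<forall>y\<in>set ys. y < i)"
    then obtain y where y: "y \<in> set ys" "y \<ge> i" by auto
    have "y \<noteq> i" using dys(2) y(1) by metis
    then have yi: "y > i" using y(2) by simp
    have cy: "card (set ys) = i - 1" using distinct_card[OF dys(1)] ly by simp
    have "\<not> {1..i-1} \<subseteq> set ys"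
    proof
      assume "{1..i-1} \<subseteq> set ys"
      then have "insert y {1..i-1} \<subseteq> set ys" using y by auto
      then have "card (insert y {1..i-1}) \<le> card (set ys)" by (intro card_mono) auto
      moreover have "y \<notin> {1..i-1}" using yi by simp
      then have "card (insert y {1..i-1}) = i" using assms(1) by simp
      ultimately show False using cy assms(1) by simp
    qed
    then obtain z where z: "z \<in> {1..i-1}" "z \<notin> set ys" by blast
    then have "z \<in> set xs" using s assms by auto
    then have "z \<in> set w" using z xs by auto
    moreover have "z < i" using z(1) assms(1) by auto
    ultimately show False using free321_no_pat[OF fys y(1)] yi by blast
  qed
  have sys: "set ys = {1..i-1}"
  proof -
    have "set ys \<subseteq> {1..i-1}" using small s xs by fastforce
    moreover have "card (set ys) = card {1..i-1}" using distinct_card[OF dys(1)] ly by simp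
    ultimately show ?thesis by (intro card_subset_eq) auto
  qed
  have sw: "set w = {i+1..n}"
  proof -
    have sx: "set xs = set ys \<union> {i} \<union> set w" using xs by auto
    show ?thesis
    proof (intro equalityI subsetI)
      fix x assume x: "x \<in> set w"
      then have "x \<in> {1..n}" "x \<noteq> i" "x \<notin> {1..i-1}" using s sx sys dys(3,5) by auto
      then show "x \<in> {i+1..n}" by auto
    next
      fix x assume x: "x \<in> {i+1..n}"
      then have "x \<in> set xs" "x \<noteq> i" "x \<notin> set ys" using s sys by auto
      then show "x \<in> set w" using sx by auto
    qed
  qed
  define zs where "zs = map (\<lambda>z. z - i) w"
  have wz: "map (\<lambda>z. z + i) zs = w" unfolding zs_def using sw by (auto intro: map_idI)
  have "inj_on (\<lambda>z. z - i) (set w)" using sw by (auto simp: inj_on_def)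
  then have dz: "distinct zs" unfolding zs_def using dys(4) by (simp add: distinct_map)
  have sz: "set zs = {1..n-i}" unfolding zs_def using sw image_minus_interval by simp
  have sep: "\<forall>y\<in>set ys. \<forall>z\<in>set (i # w). y < z" using sys sw by auto
  have "free321 ys \<and> free321 (i # w)" using free321_append_sep[OF sep] fys by simp
  then have fy: "free321 ys" and fw: "free321 w" by auto
  have fz: "free321 zs" using fw wz free321_map_add[of i zs] by simp
  have "ys \<in> LL (i - 1)" using dys(1) sys fy unfolding LL_def by auto
  moreover have "zs \<in> LL (n - i)" using dz sz fz unfolding LL_def by auto
  ultimately show ?thesis using xs wz by metis
qed

lemma card_LL_fix:
  assumes "1 \<le> i" "i \<le> n"
  shows "card {xs \<in> LL n. xs ! (i - 1) = i} = card (LL (i - 1)) * card (LL (n - i))"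
proof -
  define h where "h = (\<lambda>(ys, zs). ys @ i # map (\<lambda>z. z + i) zs)"
  have img: "h ` (LL (i - 1) \<times> LL (n - i)) = {xs \<in> LL n. xs ! (i - 1) = i}"
  proof
    show "h ` (LL (i - 1) \<times> LL (n - i)) \<subseteq> {xs \<in> LL n. xs ! (i - 1) = i}"
      using fix_forward[OF assms] unfolding h_def by auto
    show "{xs \<in> LL n. xs ! (i - 1) = i} \<subseteq> h ` (LL (i - 1) \<times> LL (n - i))"
    proof
      fix xs assume "xs \<in> {xs \<in> LL n. xs ! (i - 1) = i}"
      then obtain ys zs where "ys \<in> LL (i - 1)" "zs \<in> LL (n - i)" "xs = ys @ i # map (\<lambda>z. z + i) zs"
        using fix_backward[OF assms] by blast
      then show "xs \<in> h ` (LL (i - 1) \<times> LL (n - i))" unfolding h_def by force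
    qed
  qed
  have inj: "inj_on h (LL (i - 1) \<times> LL (n - i))"
  proof (rule inj_onI)
    fix a b assume ab: "a \<in> LL (i - 1) \<times> LL (n - i)" "b \<in> LL (i - 1) \<times> LL (n - i)" "h a = h b"
    obtain ys zs ys' zs' where a: "a = (ys, zs)" and b: "b = (ys', zs')" by (cases a, cases b) auto
    have "length ys = length ys'" using ab a b LL_length by auto
    then have "ys = ys'" "map (\<lambda>z. z + i) zs = map (\<lambda>z. z + i) zs'"
      using ab(3) a b unfolding h_def by auto
    moreover have "inj (\<lambda>z::nat. z + i)" by (auto simp: inj_def)
    ultimately show "a = b" using a b by (simp add: inj_map_eq_map)
  qed
  have "card {xs \<in> LL n. xs ! (i - 1) = i} = card (LL (i - 1) \<times> LL (n - i))"
    using card_image[OF inj] img by simp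
  then show ?thesis by (simp add: card_cartesian_product)
qed


definition cat :: "nat \<Rightarrow> real" where
  "cat n = fact (2*n) / (fact n * fact (Suc n))"

lemma cat_0: "cat 0 = 1" unfolding cat_def by simp

lemma cat_alg2:
  fixes F f x :: real
  assumes "f > 0" "x \<ge> 0"
  shows "((2 * x + 2) * (2 * x + 1) * F) / (((x + 1) * f) * ((x + 2) * (x + 1) * f))
       = F / (f * ((x + 1) * f)) * ((2 * (2 * x + 1)) / (x + 2))"
proof -
  have nz: "f \<noteq> 0" "x + 1 \<noteq> 0" "x + 2 \<noteq> 0" using assms by auto
  show ?thesis using nz by (simp add: divide_simps) (simp add: algebra_simps)
qed

lemma cat_Suc: "cat (Suc n) = cat n * ((2 * (2 * real n + 1)) / (real n + 2))"
proof -
  have f1: "(fact (2 * Suc n) :: real) = (2 * real n + 2) * (2 * real n + 1) * fact (2 * n)"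
  proof -
    have "2 * Suc n = Suc (Suc (2 * n))" by simp
    then show ?thesis by (simp add: algebra_simps)
  qed
  have f2: "(fact (Suc (Suc n)) :: real) = (real n + 2) * (real n + 1) * fact n" by (simp add: algebra_simps)
  have f3: "(fact (Suc n) :: real) = (real n + 1) * fact n" by (simp add: algebra_simps)
  show ?thesis unfolding cat_def f1 f2 f3
    by (rule cat_alg2) auto
qed

lemma cat_pos: "cat n > 0" unfolding cat_def by simp

lemma cat_ge1: "cat n \<ge> 1"
proof (induction n)
  case 0 then show ?case by (simp add: cat_0)
next
  case (Suc n)
  have "1 \<le> (2 * (2 * real n + 1)) / (real n + 2)" by (simp add: field_simps)
  then have "cat n * 1 \<le> cat n * ((2 * (2 * real n + 1)) / (real n + 2))"
    using cat_pos[of n] by (intro mult_left_mono) auto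
  then show ?case using Suc.IH unfolding cat_Suc by linarith
qed

lemma cat_Suc_le: "cat (Suc n) \<le> 4 * cat n"
proof -
  have "(2 * (2 * real n + 1)) / (real n + 2) \<le> 4" by (simp add: field_simps)
  then have "cat n * ((2 * (2 * real n + 1)) / (real n + 2)) \<le> cat n * 4"
    using cat_pos[of n] by (intro mult_left_mono) auto
  then show ?thesis unfolding cat_Suc by (simp add: mult.commute)
qed

lemma cat_add_le: "cat (m + d) \<le> 4 ^ d * cat m"
proof (induction d)
  case 0 then show ?case by simp
next
  case (Suc d)
  have "cat (m + Suc d) \<le> 4 * cat (m + d)" using cat_Suc_le[of "m + d"] by simp
  also have "\<dots> \<le> 4 * (4 ^ d * cat m)" using Suc.IH by simp
  finally show ?case by simp
qed

lemma alg_up: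
  fixes c x :: real
  assumes "x \<ge> 0"
  shows "(c * ((2 * (2 * x + 1)) / (x + 2))) ^ 2 * ((x + 1) + 1) ^ 2 * (3 * (x + 1) + 1)
        = c ^ 2 * (4 * (2 * x + 1) ^ 2 * (3 * x + 4))"
proof -
  define d where "d = x + 2"
  have nz: "d ^ 2 \<noteq> 0" using assms unfolding d_def by auto
  have h1: "(c * ((2 * (2 * x + 1)) / (x + 2))) ^ 2 = c ^ 2 * (4 * (2 * x + 1) ^ 2) / d ^ 2"
    unfolding d_def by (simp add: power_mult_distrib power_divide power2_eq_square algebra_simps)
  have h2: "(x + 1) + 1 = d" "3 * (x + 1) + 1 = 3 * x + 4" unfolding d_def by simp_all
  have "c ^ 2 * (4 * (2 * x + 1) ^ 2) / d ^ 2 * d ^ 2 * (3 * x + 4) = c ^ 2 * (4 * (2 * x + 1) ^ 2) * (3 * x + 4)"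
    using nz by simp
  then show ?thesis unfolding h1 h2 by (simp add: mult.assoc)
qed

lemma cat_upper: "cat n ^ 2 * (real n + 1) ^ 2 * (3 * real n + 1) \<le> 16 ^ n"
proof (induction n)
  case 0 then show ?case by (simp add: cat_0)
next
  case (Suc n)
  define c where "c = cat n"
  define x where "x = real n"
  have x0: "x \<ge> 0" unfolding x_def by simp
  have e: "cat (Suc n) ^ 2 * (real (Suc n) + 1) ^ 2 * (3 * real (Suc n) + 1)
        = c ^ 2 * (4 * (2 * x + 1) ^ 2 * (3 * x + 4))"
    unfolding cat_Suc of_nat_Suc c_def[symmetric] x_def[symmetric]
    using alg_up[OF x0, of c] by (simp add: add.commute)
  have poly: "4 * (2 * x + 1) ^ 2 * (3 * x + 4) \<le> 16 * ((x + 1) ^ 2 * (3 * x + 1))"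
    using x0 by (simp add: power2_eq_square algebra_simps)
  have "c ^ 2 * (4 * (2 * x + 1) ^ 2 * (3 * x + 4)) \<le> c ^ 2 * (16 * ((x + 1) ^ 2 * (3 * x + 1)))"
    using poly by (intro mult_left_mono) auto
  also have "\<dots> = 16 * (c ^ 2 * (x + 1) ^ 2 * (3 * x + 1))" by (simp add: algebra_simps)
  also have "\<dots> \<le> 16 * 16 ^ n" using Suc.IH unfolding c_def x_def by simp
  finally show ?case using e by simp
qed

lemma alg_low:
  fixes c x :: real
  assumes "x \<ge> 0"
  shows "4 * (x + 1) * ((x + 1) + 1) ^ 2 * (c * ((2 * (2 * x + 1)) / (x + 2))) ^ 2
        = c ^ 2 * (16 * (x + 1) * (2 * x + 1) ^ 2)"
proof -
  define d where "d = x + 2"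
  have nz: "d ^ 2 \<noteq> 0" using assms unfolding d_def by auto
  have h1: "(c * ((2 * (2 * x + 1)) / (x + 2))) ^ 2 = c ^ 2 * (4 * (2 * x + 1) ^ 2) / d ^ 2"
    unfolding d_def by (simp add: power_mult_distrib power_divide power2_eq_square algebra_simps)
  have h2: "(x + 1) + 1 = d" unfolding d_def by simp
  have "d ^ 2 * (c ^ 2 * (4 * (2 * x + 1) ^ 2) / d ^ 2) = c ^ 2 * (4 * (2 * x + 1) ^ 2)"
    using nz by simp
  then have e1: "4 * (x + 1) * d ^ 2 * (c ^ 2 * (4 * (2 * x + 1) ^ 2) / d ^ 2) = 4 * (x + 1) * (c ^ 2 * (4 * (2 * x + 1) ^ 2))"
    by (metis mult.assoc)
  show ?thesis unfolding h1 h2 e1 by (simp add: algebra_simps)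
qed

lemma cat_lower: "n \<ge> 1 \<Longrightarrow> 16 ^ n \<le> 4 * real n * (real n + 1) ^ 2 * cat n ^ 2"
proof (induction n rule: dec_induct)
  case base
  have "cat 1 = 1" using cat_Suc[of 0] by (simp add: cat_0)
  then show ?case by simp
next
  case (step n)
  define c where "c = cat n"
  define x where "x = real n"
  have x0: "x \<ge> 0" unfolding x_def by simp
  have e: "4 * real (Suc n) * (real (Suc n) + 1) ^ 2 * cat (Suc n) ^ 2
        = c ^ 2 * (16 * (x + 1) * (2 * x + 1) ^ 2)"
    unfolding cat_Suc of_nat_Suc c_def[symmetric] x_def[symmetric]
    using alg_low[OF x0, of c] by (simp add: add.commute)
  have poly: "16 * (4 * x * (x + 1) ^ 2) \<le> 16 * (x + 1) * (2 * x + 1) ^ 2"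
    using x0 by (simp add: power2_eq_square algebra_simps)
  have "16 ^ Suc n \<le> 16 * (4 * x * (x + 1) ^ 2 * c ^ 2)" using step.IH unfolding c_def x_def by (simp add: mult_ac)
  also have "\<dots> = c ^ 2 * (16 * (4 * x * (x + 1) ^ 2))" by (simp add: algebra_simps)
  also have "\<dots> \<le> c ^ 2 * (16 * (x + 1) * (2 * x + 1) ^ 2)"
    using poly by (intro mult_left_mono) auto
  finally show ?case using e by simp
qed


lemma cube_ineq:
  fixes A B :: real
  assumes "A \<ge> 0" "B \<ge> 0"
  shows "(A + B) ^ 3 \<le> 4 * (A ^ 3 + B ^ 3)"
proof -
  have "4 * (A ^ 3 + B ^ 3) - (A + B) ^ 3 = 3 * (A + B) * (A - B) ^ 2"
    by (simp add: power2_eq_square power3_eq_cube algebra_simps)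
  moreover have "3 * (A + B) * (A - B) ^ 2 \<ge> 0" using assms by simp
  ultimately show ?thesis by linarith
qed

definition gf :: "nat \<Rightarrow> real" where
  "gf j = real j powr (-3/2)"

lemma gf_nonneg: "gf j \<ge> 0" unfolding gf_def by simp

lemma gf_sq: "j \<ge> 1 \<Longrightarrow> gf j ^ 2 = 1 / real j ^ 3"
proof -
  assume j: "j \<ge> 1"
  then have p: "real j > 0" by simp
  have "gf j ^ 2 = real j powr (-3/2) * real j powr (-3/2)" unfolding gf_def by (simp add: power2_eq_square)
  also have "\<dots> = real j powr (-3)" by (simp add: powr_add[symmetric])
  also have "\<dots> = inverse (real j ^ 3)" using p by (simp add: powr_minus)
  finally show ?thesis by (simp add: divide_inverse)
qed

lemma summable_gf: "summable gf"
proof -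
  have "summable (\<lambda>n. of_nat n powr (-3/2) :: real)" by (subst summable_real_powr_iff) simp
  then show ?thesis unfolding gf_def by simp
qed

lemma P_bound: "cat k * cat m / cat (k + m + 1) \<le> gf (k + 1) + gf (m + 1)"
proof -
  define X where "X = cat k"
  define Y where "Y = cat m"
  define Z where "Z = cat (k + m + 1)"
  define A where "A = real k + 1"
  define B where "B = real m + 1"
  have A0: "A > 0" "A \<ge> 1" and B0: "B > 0" "B \<ge> 1" unfolding A_def B_def by auto
  have Z0: "Z > 0" unfolding Z_def by (rule cat_pos)
  have X0: "X > 0" unfolding X_def by (rule cat_pos)
  have Y0: "Y > 0" unfolding Y_def by (rule cat_pos)
  have u1: "X ^ 2 * A ^ 3 \<le> 16 ^ k"
  proof -
    have "X ^ 2 * A ^ 3 = (X ^ 2 * A ^ 2) * A" by (simp add: power3_eq_cube power2_eq_square)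
    also have "\<dots> \<le> (X ^ 2 * A ^ 2) * (3 * real k + 1)"
      by (intro mult_left_mono) (auto simp: A_def)
    also have "\<dots> \<le> 16 ^ k" using cat_upper[of k] unfolding X_def A_def by simp
    finally show ?thesis .
  qed
  have u2: "Y ^ 2 * B ^ 3 \<le> 16 ^ m"
  proof -
    have "Y ^ 2 * B ^ 3 = (Y ^ 2 * B ^ 2) * B" by (simp add: power3_eq_cube power2_eq_square)
    also have "\<dots> \<le> (Y ^ 2 * B ^ 2) * (3 * real m + 1)"
      by (intro mult_left_mono) (auto simp: B_def)
    also have "\<dots> \<le> 16 ^ m" using cat_upper[of m] unfolding Y_def B_def by simp
    finally show ?thesis .
  qed
  have NAB: "real (k + m + 1) + 1 = A + B" unfolding A_def B_def by simp
  have l: "16 ^ (k + m + 1) \<le> 4 * (A + B) ^ 3 * Z ^ 2"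
  proof -
    have "16 ^ (k + m + 1) \<le> 4 * real (k + m + 1) * (real (k + m + 1) + 1) ^ 2 * Z ^ 2"
      unfolding Z_def by (rule cat_lower) simp
    also have "\<dots> \<le> 4 * (A + B) * (A + B) ^ 2 * Z ^ 2"
      unfolding NAB by (intro mult_right_mono mult_left_mono) (auto simp: A_def B_def)
    also have "\<dots> = 4 * (A + B) ^ 3 * Z ^ 2" by (simp add: power3_eq_cube power2_eq_square)
    finally show ?thesis .
  qed
  have "(X ^ 2 * A ^ 3) * (Y ^ 2 * B ^ 3) \<le> 16 ^ k * 16 ^ m"
    using u1 u2 X0 Y0 A0 B0 by (intro mult_mono) auto
  also have "\<dots> = 16 ^ (k + m + 1) / 16" by (simp add: power_add)
  also have "\<dots> \<le> 4 * (A + B) ^ 3 * Z ^ 2 / 16" using l by simp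
  also have "\<dots> \<le> 4 * (4 * (A ^ 3 + B ^ 3)) * Z ^ 2 / 16"
    using cube_ineq[of A B] A0 B0 by (intro divide_right_mono mult_right_mono mult_left_mono) auto
  also have "\<dots> = (A ^ 3 + B ^ 3) * Z ^ 2" by simp
  finally have main: "X ^ 2 * Y ^ 2 * (A ^ 3 * B ^ 3) \<le> (A ^ 3 + B ^ 3) * Z ^ 2"
    by (simp add: algebra_simps)
  have AB3: "A ^ 3 * B ^ 3 > 0" using A0 B0 by simp
  have "(X * Y / Z) ^ 2 = X ^ 2 * Y ^ 2 / Z ^ 2" by (simp add: power_mult_distrib power_divide)
  also have "\<dots> \<le> (A ^ 3 + B ^ 3) / (A ^ 3 * B ^ 3)"
    using main AB3 Z0 by (simp add: divide_simps)
  also have "\<dots> = 1 / A ^ 3 + 1 / B ^ 3" using A0 B0 by (simp add: field_simps)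
  also have "\<dots> = gf (k + 1) ^ 2 + gf (m + 1) ^ 2"
  proof -
    have e: "real (k + 1) = A" "real (m + 1) = B" unfolding A_def B_def by simp_all
    have "gf (k + 1) ^ 2 = 1 / real (k + 1) ^ 3" by (rule gf_sq) simp
    moreover have "gf (m + 1) ^ 2 = 1 / real (m + 1) ^ 3" by (rule gf_sq) simp
    ultimately show ?thesis by (simp only: e)
  qed
  also have "\<dots> \<le> (gf (k + 1) + gf (m + 1)) ^ 2"
  proof -
    have "0 \<le> 2 * gf (k + 1) * gf (m + 1)" using gf_nonneg[of "k + 1"] gf_nonneg[of "m + 1"] by simp
    then show ?thesis unfolding power2_sum by linarith
  qed
  finally have "(X * Y / Z) ^ 2 \<le> (gf (k + 1) + gf (m + 1)) ^ 2" .
  then have "X * Y / Z \<le> gf (k + 1) + gf (m + 1)"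
  proof (rule power2_le_imp_le)
    show "0 \<le> gf (k + 1) + gf (m + 1)" using gf_nonneg[of "k + 1"] gf_nonneg[of "m + 1"] by linarith
  qed
  then show ?thesis unfolding X_def Y_def Z_def .
qed

lemma tail_le:
  assumes "finite S" "\<forall>i\<in>S. N \<le> i"
  shows "(\<Sum>i\<in>S. gf i) \<le> (\<Sum>j. gf (j + N))"
proof -
  have inj: "inj_on (\<lambda>i. i - N) S"
  proof (rule inj_onI)
    fix x y assume "x \<in> S" "y \<in> S" "x - N = y - N"
    moreover have "N \<le> x" "N \<le> y" using assms(2) \<open>x \<in> S\<close> \<open>y \<in> S\<close> by auto
    ultimately show "x = y" by arith
  qed
  have "(\<Sum>i\<in>S. gf i) = (\<Sum>j\<in>(\<lambda>i. i - N) ` S. gf (j + N))"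
    using sum.reindex[OF inj, of "\<lambda>j. gf (j + N)"] assms(2) by (simp add: comp_def)
  also have "\<dots> \<le> (\<Sum>j. gf (j + N))"
    using summable_gf assms(1) gf_nonneg by (intro sum_le_suminf) auto
  finally show ?thesis .
qed

lemma tail_lim: "(\<lambda>N. \<Sum>j. gf (j + N)) \<longlonglongrightarrow> 0"
proof -
  have e: "(\<Sum>j. gf (j + N)) = suminf gf - (\<Sum>i<N. gf i)" for N
    using suminf_minus_initial_segment[OF summable_gf] by simp
  have "(\<lambda>N. suminf gf - (\<Sum>i<N. gf i)) \<longlonglongrightarrow> suminf gf - suminf gf"
    by (intro tendsto_diff tendsto_const summable_LIMSEQ[OF summable_gf])
  then show ?thesis unfolding e by simp
qed


lemma finite_av: "finite (av321 n)"
  using Phi_bij finite_LL bij_betw_finite by blast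

lemma card_av_cat: "real (card (av321 n)) = cat n"
  using card_av321 card_LL_real unfolding cat_def by simp

lemma card_fix_cat:
  assumes "1 \<le> i" "i \<le> n"
  shows "real (card {\<tau> \<in> av321 n. \<tau> i = i}) = cat (i - 1) * cat (n - i)"
  using card_av321_fix[OF assms] card_LL_fix[OF assms] card_LL_real unfolding cat_def by simp

definition Sfix :: "nat \<Rightarrow> int \<Rightarrow> int \<Rightarrow> (nat \<Rightarrow> nat) set" where
  "Sfix n a b = {\<tau> \<in> av321 n. \<exists>i::nat. a \<le> int i \<and> int i \<le> b \<and> \<tau> i = i}"

lemma prob_eq: "prob_fixed_in n a b = real (card (Sfix n a b)) / cat n"
  unfolding prob_fixed_in_def Sfix_def card_av_cat ..

lemma prob_nonneg: "prob_fixed_in n a b \<ge> 0"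
  unfolding prob_eq using cat_pos[of n] by simp

lemma finite_Sfix: "finite (Sfix n a b)"
  unfolding Sfix_def using finite_av by simp

lemma prob_ge_fix:
  assumes "1 \<le> i" "i \<le> n" "a \<le> int i" "int i \<le> b"
  shows "prob_fixed_in n a b \<ge> cat (i - 1) * cat (n - i) / cat n"
proof -
  have "{\<tau> \<in> av321 n. \<tau> i = i} \<subseteq> Sfix n a b" unfolding Sfix_def using assms by blast
  then have "card {\<tau> \<in> av321 n. \<tau> i = i} \<le> card (Sfix n a b)"
    using finite_Sfix by (rule card_mono[rotated])
  then have le: "real (card {\<tau> \<in> av321 n. \<tau> i = i}) \<le> real (card (Sfix n a b))"
    by (simp only: of_nat_le_iff)
  have "cat (i - 1) * cat (n - i) \<le> real (card (Sfix n a b))"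
    using le card_fix_cat[OF assms(1,2)] by linarith
  then show ?thesis unfolding prob_eq using cat_pos[of n] by (intro divide_right_mono) auto
qed

lemma prob_one:
  assumes "n < i" "a \<le> int i" "int i \<le> b"
  shows "prob_fixed_in n a b = 1"
proof -
  have "Sfix n a b = av321 n"
  proof
    show "Sfix n a b \<subseteq> av321 n" unfolding Sfix_def by auto
    show "av321 n \<subseteq> Sfix n a b"
    proof
      fix \<tau> assume t: "\<tau> \<in> av321 n"
      then have "\<tau> permutes {1..n}" unfolding av321_def by auto
      then have "\<tau> i = i" using assms(1) by (simp add: permutes_not_in)
      then show "\<tau> \<in> Sfix n a b" unfolding Sfix_def using t assms by auto
    qed
  qed
  then have "real (card (Sfix n a b)) = cat n" using card_av_cat[of n] by simp
  then show ?thesis unfolding prob_eq using cat_pos[of n] by simp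
qed

lemma prob_lower_a:
  assumes "0 < a" "a \<le> b"
  shows "prob_fixed_in n a b \<ge> (1/4) ^ (nat a)"
proof (cases "n < nat a")
  case True
  then have "prob_fixed_in n a b = 1" using assms by (intro prob_one[of n "nat a"]) auto
  moreover have "(1/4::real) ^ (nat a) \<le> 1" by (rule power_le_one) auto
  ultimately show ?thesis by simp
next
  case False
  define i where "i = nat a"
  have i: "1 \<le> i" "i \<le> n" "a \<le> int i" "int i \<le> b" using assms False unfolding i_def by auto
  have c: "cat n \<le> 4 ^ i * cat (n - i)" using cat_add_le[of "n - i" i] i(2) by simp
  have "(1/4::real) ^ i = cat (n - i) / (4 ^ i * cat (n - i))"
    using cat_pos[of "n - i"] by (simp add: power_one_over)
  also have "\<dots> \<le> cat (n - i) / cat n"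
    using c cat_pos[of n] cat_pos[of "n - i"] by (intro divide_left_mono) auto
  also have "\<dots> \<le> cat (i - 1) * cat (n - i) / cat n"
    using cat_ge1[of "i - 1"] cat_pos[of n] cat_pos[of "n - i"]
    by (intro divide_right_mono) (auto intro: mult_right_mono[of 1, simplified])
  also have "\<dots> \<le> prob_fixed_in n a b" by (rule prob_ge_fix[OF i])
  finally show ?thesis unfolding i_def .
qed

lemma prob_lower_b:
  assumes "0 < a" "a \<le> b"
  shows "prob_fixed_in n a b \<ge> (1/4) ^ (nat (int n - b) + 1)"
proof (cases "n < nat b")
  case True
  then have "prob_fixed_in n a b = 1" using assms by (intro prob_one[of n "nat b"]) auto
  moreover have "(1/4::real) ^ (nat (int n - b) + 1) \<le> 1" by (rule power_le_one) auto
  ultimately show ?thesis by simp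
next
  case False
  define i where "i = nat b"
  have i: "1 \<le> i" "i \<le> n" "a \<le> int i" "int i \<le> b" using assms False unfolding i_def by auto
  define d where "d = nat (int n - b) + 1"
  have d: "n = (i - 1) + d" using i unfolding d_def i_def by auto
  have c: "cat n \<le> 4 ^ d * cat (i - 1)" using cat_add_le[of "i - 1" d] d by simp
  have "(1/4::real) ^ d = cat (i - 1) / (4 ^ d * cat (i - 1))"
    using cat_pos[of "i - 1"] by (simp add: power_one_over)
  also have "\<dots> \<le> cat (i - 1) / cat n"
    using c cat_pos[of n] cat_pos[of "i - 1"] by (intro divide_left_mono) auto
  also have "\<dots> \<le> cat (i - 1) * cat (n - i) / cat n"
    using cat_ge1[of "n - i"] cat_pos[of n] cat_pos[of "i - 1"]
    by (intro divide_right_mono) (auto intro: mult_left_mono[of 1, simplified])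
  also have "\<dots> \<le> prob_fixed_in n a b" by (rule prob_ge_fix[OF i])
  finally show ?thesis unfolding d_def .
qed

definition TT :: "nat \<Rightarrow> real" where
  "TT N = (\<Sum>j. gf (j + N))"

lemma prob_upper:
  assumes "0 < a" "a \<le> b" "b \<le> int n"
  shows "prob_fixed_in n a b \<le> TT (nat a) + TT (Suc (nat (int n - b)))"
proof -
  define I where "I = {nat a..nat b}"
  have finI: "finite I" unfolding I_def by simp
  have I: "\<And>i. i \<in> I \<Longrightarrow> 1 \<le> i \<and> i \<le> n" unfolding I_def using assms by auto
  have "Sfix n a b \<subseteq> (\<Union>i\<in>I. {\<tau> \<in> av321 n. \<tau> i = i})"
  proof
    fix \<tau> assume "\<tau> \<in> Sfix n a b"
    then obtain i where i: "\<tau> \<in> av321 n" "a \<le> int i" "int i \<le> b" "\<tau> i = i" unfolding Sfix_def by auto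
    then have "nat a \<le> i" "i \<le> nat b" by linarith+
    then have "i \<in> I" unfolding I_def by simp
    then show "\<tau> \<in> (\<Union>i\<in>I. {\<tau> \<in> av321 n. \<tau> i = i})" using i by blast
  qed
  moreover have "finite (\<Union>i\<in>I. {\<tau> \<in> av321 n. \<tau> i = i})"
    by (intro finite_UN_I finI) (simp add: finite_av)
  ultimately have "card (Sfix n a b) \<le> card (\<Union>i\<in>I. {\<tau> \<in> av321 n. \<tau> i = i})"
    by (rule card_mono[rotated])
  also have "\<dots> \<le> (\<Sum>i\<in>I. card {\<tau> \<in> av321 n. \<tau> i = i})" by (rule card_UN_le[OF finI])
  finally have "real (card (Sfix n a b)) \<le> real (\<Sum>i\<in>I. card {\<tau> \<in> av321 n. \<tau> i = i})"
    by (simp only: of_nat_le_iff)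
  also have "\<dots> = (\<Sum>i\<in>I. real (card {\<tau> \<in> av321 n. \<tau> i = i}))" by (rule of_nat_sum)
  also have "\<dots> = (\<Sum>i\<in>I. cat (i - 1) * cat (n - i))"
    using I card_fix_cat by (intro sum.cong) auto
  finally have "prob_fixed_in n a b \<le> (\<Sum>i\<in>I. cat (i - 1) * cat (n - i)) / cat n"
    unfolding prob_eq using cat_pos[of n] by (intro divide_right_mono) auto
  also have "\<dots> = (\<Sum>i\<in>I. cat (i - 1) * cat (n - i) / cat n)" by (simp add: sum_divide_distrib)
  also have "\<dots> \<le> (\<Sum>i\<in>I. gf i + gf (n + 1 - i))"
  proof (rule sum_mono)
    fix i assume "i \<in> I"
    then have i: "1 \<le> i" "i \<le> n" using I by auto
    then have "(i - 1) + (n - i) + 1 = n" "i - 1 + 1 = i" "n - i + 1 = n + 1 - i" by auto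
    then show "cat (i - 1) * cat (n - i) / cat n \<le> gf i + gf (n + 1 - i)"
      using P_bound[of "i - 1" "n - i"] by simp
  qed
  also have "\<dots> = (\<Sum>i\<in>I. gf i) + (\<Sum>i\<in>I. gf (n + 1 - i))" by (rule sum.distrib)
  also have "(\<Sum>i\<in>I. gf i) \<le> TT (nat a)" unfolding TT_def using finI I_def by (intro tail_le) auto
  also have "(\<Sum>i\<in>I. gf (n + 1 - i)) \<le> TT (Suc (nat (int n - b)))"
  proof -
    have inj: "inj_on (\<lambda>i. n + 1 - i) I"
    proof (rule inj_onI)
      fix x y assume "x \<in> I" "y \<in> I" "n + 1 - x = n + 1 - y"
      moreover have "x \<le> n" "y \<le> n" using I \<open>x \<in> I\<close> \<open>y \<in> I\<close> by auto
      ultimately show "x = y" by arith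
    qed
    have "(\<Sum>i\<in>I. gf (n + 1 - i)) = (\<Sum>j\<in>(\<lambda>i. n + 1 - i) ` I. gf j)"
      using sum.reindex[OF inj, of gf] by (simp add: comp_def)
    also have "\<dots> \<le> TT (Suc (nat (int n - b)))" unfolding TT_def
    proof (rule tail_le)
      show "finite ((\<lambda>i. n + 1 - i) ` I)" using finI by simp
      show "\<forall>i\<in>(\<lambda>i. n + 1 - i) ` I. Suc (nat (int n - b)) \<le> i" unfolding I_def using assms by auto
    qed
    finally show ?thesis .
  qed
  finally show ?thesis by simp
qed

lemma TT_lim: "TT \<longlonglongrightarrow> 0"
  unfolding TT_def by (rule tail_lim)

theorem corollary1p3:
  fixes a b :: "nat \<Rightarrow> int"
  assumes "\<And>n. 0 < a n" and "\<And>n. a n \<le> b n"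
  shows "(\<lambda>n. prob_fixed_in n (a n) (b n)) \<longlonglongrightarrow> 0 \<longleftrightarrow>
         (filterlim a at_top sequentially \<and> filterlim (\<lambda>n. int n - b n) at_top sequentially)"
proof
  assume lim: "(\<lambda>n. prob_fixed_in n (a n) (b n)) \<longlonglongrightarrow> 0"
  have A: "filterlim a at_top sequentially"
    unfolding filterlim_at_top
  proof
    fix Z :: int
    have "eventually (\<lambda>n. prob_fixed_in n (a n) (b n) < (1/4) ^ (nat Z)) sequentially"
      using order_tendstoD(2)[OF lim, of "(1/4) ^ (nat Z)"] by simp
    then show "eventually (\<lambda>n. Z \<le> a n) sequentially"
    proof (rule eventually_mono)
      fix n assume "prob_fixed_in n (a n) (b n) < (1/4) ^ (nat Z)"
      then have "(1/4::real) ^ (nat (a n)) < (1/4) ^ (nat Z)"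
        using prob_lower_a[OF assms(1)[of n] assms(2)[of n], of n] by linarith
      then have "nat Z < nat (a n)" by simp
      then show "Z \<le> a n" by linarith
    qed
  qed
  have B: "filterlim (\<lambda>n. int n - b n) at_top sequentially"
    unfolding filterlim_at_top
  proof
    fix Z :: int
    have "eventually (\<lambda>n. prob_fixed_in n (a n) (b n) < (1/4) ^ (nat Z + 1)) sequentially"
      using order_tendstoD(2)[OF lim, of "(1/4) ^ (nat Z + 1)"] by simp
    then show "eventually (\<lambda>n. Z \<le> int n - b n) sequentially"
    proof (rule eventually_mono)
      fix n assume "prob_fixed_in n (a n) (b n) < (1/4) ^ (nat Z + 1)"
      then have "(1/4::real) ^ (nat (int n - b n) + 1) < (1/4) ^ (nat Z + 1)"
        using prob_lower_b[OF assms(1)[of n] assms(2)[of n], of n] by linarith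
      then have "nat Z + 1 < nat (int n - b n) + 1" by simp
      then show "Z \<le> int n - b n" by linarith
    qed
  qed
  show "filterlim a at_top sequentially \<and> filterlim (\<lambda>n. int n - b n) at_top sequentially"
    using A B by simp
next
  assume "filterlim a at_top sequentially \<and> filterlim (\<lambda>n. int n - b n) at_top sequentially"
  then have A: "filterlim a at_top sequentially" and B: "filterlim (\<lambda>n. int n - b n) at_top sequentially"
    by auto
  have evb: "eventually (\<lambda>n. b n \<le> int n) sequentially"
    using B unfolding filterlim_at_top by (auto elim: allE[of _ 0] eventually_mono)
  have na: "filterlim (\<lambda>n. nat (a n)) sequentially sequentially"
    by (rule filterlim_compose[OF filterlim_nat_sequentially A])
  have nb: "filterlim (\<lambda>n. nat (int n - b n)) sequentially sequentially"
    by (rule filterlim_compose[OF filterlim_nat_sequentially B])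
  have t1: "(\<lambda>n. TT (nat (a n))) \<longlonglongrightarrow> 0"
    by (rule filterlim_compose[OF TT_lim na])
  have t2: "(\<lambda>n. TT (Suc (nat (int n - b n)))) \<longlonglongrightarrow> 0"
    by (rule filterlim_compose[OF LIMSEQ_Suc[OF TT_lim] nb])
  have h: "(\<lambda>n. TT (nat (a n)) + TT (Suc (nat (int n - b n)))) \<longlonglongrightarrow> 0"
    using tendsto_add[OF t1 t2] by simp
  show "(\<lambda>n. prob_fixed_in n (a n) (b n)) \<longlonglongrightarrow> 0"
  proof (rule tendsto_sandwich[OF _ _ tendsto_const h])
    show "eventually (\<lambda>n. 0 \<le> prob_fixed_in n (a n) (b n)) sequentially"
      using prob_nonneg by simp
    show "eventually (\<lambda>n. prob_fixed_in n (a n) (b n) \<le> TT (nat (a n)) + TT (Suc (nat (int n - b n)))) sequentially"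
      using evb by (rule eventually_mono) (rule prob_upper[OF assms(1) assms(2)])
  qed
qed


end
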